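(* Let $v$ be any complex number. For every integer $R\geq 1$, as real $n\to\infty$, \[ \Gamma(n+v+1)=\sqrt{2\pi n}\,\frac{n^{n+v}}{e^n}\left(1+\frac{\gamma_1(v)}{n}+\frac{\gamma_2(v)}{n^2}+\cdots+\frac{\gamma_{R-1}(v)}{n^{R-1}}+O\!\left(\frac{1}{n^R}\right)\right), \] with an implied constant depending only on $R$ and $v$, where \[ \gamma_r(v)=\sum_{m=0}^{2r}(-1)^m\binom{v}{2r-m}\sum_{k=0}^{m}\frac{(2r+2k-1)!!}{(-1)^k\,k!}\,\mathcal{A}_{m,k}\!\left(\tfrac13,\tfrac14,\tfrac15,\dots\right). \]
   Context: For integers $n$ and $k\geq 0$ and a sequence $a_1,a_2,\dots$ of complex numbers, the De Moivre polynomial $\mathcal{A}_{n,k}(a_1,a_2,\dots)$ is the coefficient of $x^n$ in the formal power series $(a_1x+a_2x^2+a_3x^3+\cdots)^k$ (so $\mathcal{A}_{0,0}=1$ and $\mathcal{A}_{n,k}=0$ for $n<k$). The double factorial is $n!!=n(n-2)\cdots 3\cdot 1$ for odd $n\geq1$, $n!!=n(n-2)\cdots 4\cdot 2$ for even $n\geq 2$, and $0!!=(-1)!!=1$. For complex $v$ and integer $j\geq0$, $\binom{v}{j}=v(v-1)\cdots(v-j+1)/j!$. Here $n^{n+v}=e^{(n+v)\log n}$. *)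

theory Defs
  imports "HOL-Analysis.Analysis" "HOL-Computational_Algebra.Formal_Power_Series"
    "HOL-Library.Landau_Symbols"
begin

text \<open>De Moivre polynomial: coefficient of x^n in (a_1 x + a_2 x^2 + ...)^k.
  The sequence a_1, a_2, ... is given as a function a :: nat => complex, using a i for i >= 1
  (the value a 0 is ignored).\<close>
definition de_moivre :: "nat \<Rightarrow> nat \<Rightarrow> (nat \<Rightarrow> complex) \<Rightarrow> complex" where
  "de_moivre n k a = fps_nth ((Abs_fps (\<lambda>i. if i = 0 then 0 else a i)) ^ k) n"

text \<open>Double factorial for integers n >= -1 (value 1 for n <= 0).\<close>
definition dfact :: "int \<Rightarrow> nat" where
  "dfact n = nat (\<Prod>{i \<in> {1..n}. even (n - i)})"

definition gamma_coeff :: "nat \<Rightarrow> complex \<Rightarrow> complex" where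
  "gamma_coeff r v =
     (\<Sum>m = 0..2*r. (-1)^m * (v gchoose (2*r - m)) *
        (\<Sum>k = 0..m. of_nat (dfact (2 * int r + 2 * int k - 1)) / ((-1)^k * fact k)
                      * de_moivre m k (\<lambda>i. 1 / of_nat (i + 2))))"

end

theory Submission
  imports Defs "HOL-Probability.Distributions" "HOL-Real_Asymp.Real_Asymp"
begin

definition Gf :: "complex fps" where
  "Gf = Abs_fps (\<lambda>i. if i = 0 then 0 else (-1)^(i+1) / of_nat (i+2))"
definition Df :: "complex fps" where
  "Df = Abs_fps (\<lambda>i. if i = 0 then 0 else 1 / of_nat (i+2))"

lemma Gf_nth: "fps_nth Gf i = (-1)^(i+1) * fps_nth Df i"
  by (simp add: Gf_def Df_def)

lemma Gf_pow_nth: "fps_nth (Gf ^ k) m = (-1)^(m+k) * fps_nth (Df ^ k) m"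
proof (induction k arbitrary: m)
  case 0
  then show ?case by (auto simp: fps_one_nth)
next
  case (Suc k)
  have "fps_nth (Gf ^ Suc k) m = (\<Sum>i=0..m. fps_nth Gf i * fps_nth (Gf ^ k) (m - i))"
    by (simp add: fps_mult_nth)
  also have "\<dots> = (\<Sum>i=0..m. (-1)^(m + Suc k) * (fps_nth Df i * fps_nth (Df ^ k) (m - i)))"
  proof (rule sum.cong[OF refl])
    fix i assume i: "i \<in> {0..m}"
    have "(-1::complex)^(i+1) * (-1)^(m - i + k) = (-1)^(m + Suc k)"
      using i by (simp add: power_add[symmetric])
    then show "fps_nth Gf i * fps_nth (Gf ^ k) (m - i) = (-1)^(m + Suc k) * (fps_nth Df i * fps_nth (Df ^ k) (m - i))"
      by (simp add: Gf_nth Suc.IH algebra_simps)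
  qed
  also have "\<dots> = (-1)^(m + Suc k) * fps_nth (Df ^ Suc k) m"
    by (simp add: fps_mult_nth sum_distrib_left)
  finally show ?case .
qed

lemma fps_pow_nth_zero:
  fixes f :: "'a::comm_ring_1 fps"
  assumes "fps_nth f 0 = 0" "m < k"
  shows "fps_nth (f ^ k) m = 0"
proof -
  define g where "g = fps_shift 1 f"
  have g: "f = fps_X * g"
    by (rule fps_ext) (simp add: g_def fps_X_mult_nth assms(1))
  have "f ^ k = fps_X ^ k * g ^ k" by (simp add: g power_mult_distrib)
  then show ?thesis using assms(2) by (simp add: fps_X_power_mult_nth)
qed

lemma Df_pow_nth_zero: "m < k \<Longrightarrow> fps_nth (Df ^ k) m = 0"
  by (rule fps_pow_nth_zero) (auto simp: Df_def)

lemma Gf_pow_nth_zero: "m < k \<Longrightarrow> fps_nth (Gf ^ k) m = 0"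
  by (rule fps_pow_nth_zero) (auto simp: Gf_def)

lemma de_moivre_Df: "de_moivre m k (\<lambda>i. 1 / of_nat (i + 2)) = fps_nth (Df ^ k) m"
  by (simp only: de_moivre_def Df_def)

lemma dfact_odd: "real (dfact (2 * int p - 1)) * 2^p * fact p = fact (2 * p)"
proof (induction p)
  case 0
  then show ?case by (simp add: dfact_def)
next
  case (Suc p)
  have set: "{i \<in> {1..2 * int (Suc p) - 1}. even (2 * int (Suc p) - 1 - i)} =
        insert (2 * int p + 1) {i \<in> {1..2 * int p - 1}. even (2 * int p - 1 - i)}"
    by (rule set_eqI, simp, presburger)
  have fin: "finite {i \<in> {1..2 * int p - 1}. even (2 * int p - 1 - i)}"
    by (rule finite_Collect_conjI, rule disjI1) simp
  have nn: "0 \<le> \<Prod>{i \<in> {1..2 * int p - 1}. even (2 * int p - 1 - i)}"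
    by (rule prod_nonneg) auto
  have "dfact (2 * int (Suc p) - 1) = nat ((2 * int p + 1) * \<Prod>{i \<in> {1..2 * int p - 1}. even (2 * int p - 1 - i)})"
    unfolding dfact_def set by (subst prod.insert[OF fin]) auto
  also have "\<dots> = (2 * p + 1) * dfact (2 * int p - 1)"
    unfolding dfact_def using nn by (simp add: nat_mult_distrib nat_add_distrib)
  finally have eq: "dfact (2 * int (Suc p) - 1) = (2 * p + 1) * dfact (2 * int p - 1)" .
  have "real (dfact (2 * int (Suc p) - 1)) = real ((2 * p + 1) * dfact (2 * int p - 1))"
    by (simp only: eq)
  then have "real (dfact (2 * int (Suc p) - 1)) = (2 * p + 1) * real (dfact (2 * int p - 1))"
    by (simp only: of_nat_mult of_nat_add of_nat_1 of_nat_numeral)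
  then have "real (dfact (2 * int (Suc p) - 1)) * 2 ^ Suc p * fact (Suc p) =
       (2 * p + 1) * (2 * (p+1)) * (real (dfact (2 * int p - 1)) * 2^p * fact p)"
    by (simp add: algebra_simps)
  also have "\<dots> = fact (2 * Suc p)"
    using Suc.IH by (simp add: algebra_simps)
  finally show ?case .
qed

lemma gamma_coeff_alt:
  assumes "2 * r < K"
  shows "gamma_coeff r v = (\<Sum>k<K. of_nat (dfact (2 * int r + 2 * int k - 1)) / fact k
            * fps_nth (fps_binomial v * Gf ^ k) (2 * r))"
proof -
  have "gamma_coeff r v = (\<Sum>m = 0..2*r. \<Sum>k = 0..m. (-1)^m * (v gchoose (2*r - m)) *
        (of_nat (dfact (2 * int r + 2 * int k - 1)) / ((-1)^k * fact k) * fps_nth (Df ^ k) m))"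
    unfolding gamma_coeff_def de_moivre_Df by (simp add: sum_distrib_left)
  also have "\<dots> = (\<Sum>m = 0..2*r. \<Sum>k<K. (-1)^m * (v gchoose (2*r - m)) *
        (of_nat (dfact (2 * int r + 2 * int k - 1)) / ((-1)^k * fact k) * fps_nth (Df ^ k) m))"
  proof (rule sum.cong[OF refl])
    fix m assume m: "m \<in> {0..2*r}"
    have sub: "{0..m} \<subseteq> {..<K}" using m assms by auto
    show "(\<Sum>k = 0..m. (-1)^m * (v gchoose (2*r - m)) *
        (of_nat (dfact (2 * int r + 2 * int k - 1)) / ((-1)^k * fact k) * fps_nth (Df ^ k) m)) =
        (\<Sum>k<K. (-1)^m * (v gchoose (2*r - m)) *
        (of_nat (dfact (2 * int r + 2 * int k - 1)) / ((-1)^k * fact k) * fps_nth (Df ^ k) m))"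
    proof (rule sum.mono_neutral_left)
      show "\<forall>i\<in>{..<K} - {0..m}. (-1)^m * (v gchoose (2*r - m)) *
        (of_nat (dfact (2 * int r + 2 * int i - 1)) / ((-1)^i * fact i) * fps_nth (Df ^ i) m) = 0"
        using Df_pow_nth_zero by auto
    qed (use sub in auto)
  qed
  also have "\<dots> = (\<Sum>k<K. \<Sum>m = 0..2*r. (-1)^m * (v gchoose (2*r - m)) *
        (of_nat (dfact (2 * int r + 2 * int k - 1)) / ((-1)^k * fact k) * fps_nth (Df ^ k) m))"
    by (rule sum.swap)
  also have "\<dots> = (\<Sum>k<K. of_nat (dfact (2 * int r + 2 * int k - 1)) / fact k
            * fps_nth (fps_binomial v * Gf ^ k) (2 * r))"
  proof (rule sum.cong[OF refl])
    fix k
    have "fps_nth (fps_binomial v * Gf ^ k) (2 * r) = (\<Sum>m = 0..2*r. fps_nth (Gf ^ k) m * (v gchoose (2*r - m)))"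
      by (subst mult.commute) (simp add: fps_mult_nth fps_binomial_def)
    also have "\<dots> = (\<Sum>m = 0..2*r. (-1)^(m+k) * fps_nth (Df ^ k) m * (v gchoose (2*r - m)))"
      by (simp add: Gf_pow_nth)
    finally have eq: "fps_nth (fps_binomial v * Gf ^ k) (2 * r) = \<dots>" .
    have sgn: "(1::complex) / (-1)^k = (-1)^k"
      by (cases "even k") auto
    show "(\<Sum>m = 0..2*r. (-1)^m * (v gchoose (2*r - m)) *
        (of_nat (dfact (2 * int r + 2 * int k - 1)) / ((-1)^k * fact k) * fps_nth (Df ^ k) m)) =
        of_nat (dfact (2 * int r + 2 * int k - 1)) / fact k * fps_nth (fps_binomial v * Gf ^ k) (2 * r)"
      unfolding eq sum_distrib_left
    proof (rule sum.cong[OF refl])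
      fix m
      have "(1::complex) / ((-1)^k * fact k) = (-1)^k / fact k"
        using sgn by (simp add: divide_simps) 
      then show "(-1)^m * (v gchoose (2*r - m)) *
        (of_nat (dfact (2 * int r + 2 * int k - 1)) / ((-1)^k * fact k) * fps_nth (Df ^ k) m) =
        of_nat (dfact (2 * int r + 2 * int k - 1)) / fact k * ((-1)^(m+k) * fps_nth (Df ^ k) m * (v gchoose (2*r - m)))"
        by (simp add: power_add field_simps)
    qed
  qed
  finally show ?thesis .
qed

lemma gamma_coeff_0: "gamma_coeff 0 v = 1"
  by (simp add: gamma_coeff_def de_moivre_def dfact_def)

lemma hbi_lebesgue:
  fixes f :: "real \<Rightarrow> 'a::{banach, second_countable_topology}"
  assumes "has_bochner_integral lborel f x"
  shows "has_bochner_integral lebesgue f x"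
proof -
  have m: "f \<in> borel_measurable lborel"
    using assms by (simp add: borel_measurable_has_bochner_integral)
  show ?thesis
    using assms integrable_completion[OF m] integral_completion[OF m]
    by (simp add: has_bochner_integral_iff)
qed

lemma gauss_even:
  fixes a :: real
  assumes a: "a > 0"
  shows "has_bochner_integral lborel (\<lambda>s. exp (-a * s\<^sup>2) * s ^ (2 * q))
           (sqrt (pi / a) * (fact (2 * q) / ((4 * a) ^ q * fact q)))"
proof -
  define \<sigma> where "\<sigma> = 1 / sqrt (2 * a)"
  have \<sigma>: "\<sigma> > 0" using a by (simp add: \<sigma>_def)
  have \<sigma>2: "\<sigma>\<^sup>2 = 1 / (2 * a)" using a by (simp add: \<sigma>_def power_divide)
  have "has_bochner_integral lborel (\<lambda>x. normal_density 0 \<sigma> x * (x - 0) ^ (2 * q))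
          (fact (2 * q) / ((2 / \<sigma>\<^sup>2)^q * fact q))"
    by (rule normal_moment_even[OF \<sigma>])
  then have "has_bochner_integral lborel (\<lambda>x. sqrt (pi / a) * (normal_density 0 \<sigma> x * (x - 0) ^ (2 * q)))
          (sqrt (pi / a) * (fact (2 * q) / ((2 / \<sigma>\<^sup>2)^q * fact q)))"
    by (rule has_bochner_integral_mult_right)
  moreover have "sqrt (pi / a) * (normal_density 0 \<sigma> x * (x - 0) ^ (2 * q)) = exp (-a * x\<^sup>2) * x ^ (2 * q)" for x
  proof -
    have "2 * pi * \<sigma>\<^sup>2 = pi / a" using \<sigma>2 a by (simp add: field_simps)
    moreover have "- (x - 0)\<^sup>2 / (2 * \<sigma>\<^sup>2) = -a * x\<^sup>2" using a by (simp add: \<sigma>2 field_simps)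
    ultimately show ?thesis
      unfolding normal_density_def \<sigma>2 using a by (simp add: real_sqrt_divide real_sqrt_mult field_simps)
  qed
  moreover have "2 / \<sigma>\<^sup>2 = 4 * a" using a by (simp add: \<sigma>2)
  ultimately show ?thesis by (metis (no_types, lifting) ext)
qed

lemma gauss_odd:
  fixes a :: real
  assumes a: "a > 0"
  shows "has_bochner_integral lborel (\<lambda>s. exp (-a * s\<^sup>2) * s ^ (2 * q + 1)) 0"
proof -
  define \<sigma> where "\<sigma> = 1 / sqrt (2 * a)"
  have \<sigma>: "\<sigma> > 0" using a by (simp add: \<sigma>_def)
  have \<sigma>2: "\<sigma>\<^sup>2 = 1 / (2 * a)" using a by (simp add: \<sigma>_def power_divide)
  have "has_bochner_integral lborel (\<lambda>x. normal_density 0 \<sigma> x * (x - 0) ^ (2 * q + 1)) 0"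
    by (rule normal_moment_odd[OF \<sigma>])
  then have "has_bochner_integral lborel (\<lambda>x. sqrt (pi / a) * (normal_density 0 \<sigma> x * (x - 0) ^ (2 * q + 1)))
          (sqrt (pi / a) * 0)"
    by (rule has_bochner_integral_mult_right)
  moreover have "sqrt (pi / a) * (normal_density 0 \<sigma> x * (x - 0) ^ (2 * q + 1)) = exp (-a * x\<^sup>2) * x ^ (2 * q + 1)" for x
  proof -
    have "2 * pi * \<sigma>\<^sup>2 = pi / a" using \<sigma>2 a by (simp add: field_simps)
    moreover have "- (x - 0)\<^sup>2 / (2 * \<sigma>\<^sup>2) = -a * x\<^sup>2" using a by (simp add: \<sigma>2 field_simps)
    ultimately show ?thesis
      unfolding normal_density_def \<sigma>2 using a by (simp add: real_sqrt_divide real_sqrt_mult field_simps)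
  qed
  ultimately show ?thesis by (metis (no_types, lifting) ext mult_zero_right)
qed

definition gmom :: "real \<Rightarrow> nat \<Rightarrow> real" where
  "gmom N p = (if even p then sqrt (2 * pi / N) * real (dfact (int p - 1)) / N ^ (p div 2) else 0)"

lemma gauss_mom:
  fixes N :: real
  assumes N: "N > 0"
  shows "has_bochner_integral lebesgue (\<lambda>s. exp (- N * s\<^sup>2 / 2) * s ^ p) (gmom N p)"
proof (cases "even p")
  case True
  then obtain q where p: "p = 2 * q" by (elim evenE)
  have "has_bochner_integral lborel (\<lambda>s. exp (-(N/2) * s\<^sup>2) * s ^ (2 * q))
           (sqrt (pi / (N/2)) * (fact (2 * q) / ((4 * (N/2)) ^ q * fact q)))"
    by (rule gauss_even) (use N in auto)
  moreover have "sqrt (pi / (N/2)) * (fact (2 * q) / ((4 * (N/2)) ^ q * fact q)) = gmom N p"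
  proof -
    have d: "real (dfact (2 * int q - 1)) * 2^q * fact q = fact (2 * q)" by (rule dfact_odd)
    have e: "(4 * (N/2)) ^ q * fact q = (2^q * fact q) * N^q" by (simp add: power_mult_distrib)
    have f: "fact (2 * q) = real (dfact (2 * int q - 1)) * (2^q * fact q)" by (metis d mult.assoc)
    have pos: "(2::real)^q * fact q \<noteq> 0" by simp
    have "fact (2 * q) / ((4 * (N/2)) ^ q * fact q) = real (dfact (2 * int q - 1)) / N ^ q"
      unfolding e f using pos by simp
    moreover have "pi / (N/2) = 2 * pi / N" by simp
    ultimately show ?thesis by (simp add: gmom_def p)
  qed
  moreover have "(\<lambda>s. exp (-(N/2) * s\<^sup>2) * s ^ (2 * q)) = (\<lambda>s. exp (- N * s\<^sup>2 / 2) * s ^ p)"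
    by (simp add: p)
  ultimately show ?thesis by (intro hbi_lebesgue) simp
next
  case False
  then obtain q where p: "p = 2 * q + 1" by (elim oddE)
  have "has_bochner_integral lborel (\<lambda>s. exp (-(N/2) * s\<^sup>2) * s ^ (2 * q + 1)) 0"
    by (rule gauss_odd) (use N in auto)
  moreover have "(\<lambda>s. exp (-(N/2) * s\<^sup>2) * s ^ (2 * q + 1)) = (\<lambda>s. exp (- N * s\<^sup>2 / 2) * s ^ p)"
    by (simp add: p)
  ultimately show ?thesis using False by (intro hbi_lebesgue) (simp add: gmom_def)
qed

lemma gmom_scale:
  assumes "N > 0"
  shows "gmom N p = gmom 1 p / N ^ (p div 2) / sqrt N"
  using assms by (simp add: gmom_def real_sqrt_divide field_simps)

lemma Gf_nth_norm: "norm (fps_nth Gf n) \<le> 1"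
proof (cases "n = 0")
  case True then show ?thesis by (simp add: Gf_def)
next
  case False
  have e: "fps_nth Gf n = (-1)^(n+1) / of_nat (n+2)" using False by (simp add: Gf_def)
  have "norm (of_nat (n+2) :: complex) = real (n + 2)" by (rule norm_of_nat)
  then show ?thesis unfolding e by (simp add: norm_divide norm_power)
qed

lemma Gf_radius: "fps_conv_radius Gf \<ge> 1"
  unfolding fps_conv_radius_def
proof (rule conv_radius_geI_ex)
  fix r :: real assume r: "0 < r" "ereal r < 1"
  then have r1: "r < 1" by simp
  show "\<exists>z::complex. norm z = r \<and> summable (\<lambda>n. fps_nth Gf n * z ^ n)"
  proof (intro exI conjI)
    show "norm (complex_of_real r) = r" using r by simp
    show "summable (\<lambda>n. fps_nth Gf n * complex_of_real r ^ n)"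
    proof (rule summable_comparison_test')
      show "summable (\<lambda>n. r ^ n)" using r r1 by (intro summable_geometric) simp
      fix n :: nat
      have "norm (fps_nth Gf n * complex_of_real r ^ n) = norm (fps_nth Gf n) * r ^ n"
        using r by (simp add: norm_mult norm_power)
      also have "\<dots> \<le> 1 * r ^ n"
        using Gf_nth_norm r by (intro mult_right_mono) auto
      finally show "norm (fps_nth Gf n * complex_of_real r ^ n) \<le> r ^ n" by simp
    qed
  qed
qed

lemma binomial_radius: "fps_conv_radius (fps_binomial (v::complex)) \<ge> 1"
  by (simp add: fps_conv_radius_binomial)

lemma P_radius: "fps_conv_radius (fps_binomial (v::complex) * Gf ^ k) \<ge> 1"
proof -
  have "1 \<le> min (fps_conv_radius (fps_binomial v)) (fps_conv_radius (Gf ^ k))"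
    using binomial_radius[of v] Gf_radius fps_conv_radius_power[of Gf k] by (auto simp: min_def)
  also have "\<dots> \<le> fps_conv_radius (fps_binomial v * Gf ^ k)" by (rule fps_conv_radius_mult)
  finally show ?thesis .
qed

lemma eval_fps_split:
  fixes f :: "complex fps"
  assumes z: "ereal (norm z) < fps_conv_radius f"
  shows "eval_fps f z = (\<Sum>m<M. fps_nth f m * z ^ m) + z ^ M * eval_fps (fps_shift M f) z"
proof -
  have s: "summable (\<lambda>n. fps_nth f n * z ^ n)" using z by (rule summable_fps)
  have z': "ereal (norm z) < fps_conv_radius (fps_shift M f)" using z by simp
  have s2: "summable (\<lambda>n. fps_nth (fps_shift M f) n * z ^ n)" using z' by (rule summable_fps)
  have "eval_fps f z = (\<Sum>n. fps_nth f (n + M) * z ^ (n + M)) + (\<Sum>m<M. fps_nth f m * z ^ m)"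
    unfolding eval_fps_def by (rule suminf_split_initial_segment[OF s])
  also have "(\<Sum>n. fps_nth f (n + M) * z ^ (n + M)) = (\<Sum>n. z ^ M * (fps_nth (fps_shift M f) n * z ^ n))"
    by (simp add: power_add mult_ac)
  also have "\<dots> = z ^ M * eval_fps (fps_shift M f) z"
    unfolding eval_fps_def by (rule suminf_mult[OF s2])
  finally show ?thesis by simp
qed

lemma eval_fps_bounded:
  fixes f :: "complex fps"
  assumes "ereal \<delta> < fps_conv_radius f"
  shows "\<exists>C. \<forall>z. norm z \<le> \<delta> \<longrightarrow> norm (eval_fps f z) \<le> C"
proof -
  have sub: "cball (0::complex) \<delta> \<subseteq> eball 0 (fps_conv_radius f)"
  proof (intro subsetI)
    fix z :: complex assume "z \<in> cball 0 \<delta>"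
    hence "ereal (norm z) \<le> ereal \<delta>" by simp
    hence "ereal (norm z) < fps_conv_radius f" using assms by (rule order.strict_trans1)
    thus "z \<in> eball 0 (fps_conv_radius f)" by simp
  qed
  have "continuous_on (cball 0 \<delta>) (eval_fps f)"
    using continuous_on_eval_fps sub by (rule continuous_on_subset)
  then have "compact (eval_fps f ` cball 0 \<delta>)"
    by (intro compact_continuous_image) auto
  then obtain C where "\<forall>y \<in> eval_fps f ` cball 0 \<delta>. norm y \<le> C"
    using compact_imp_bounded bounded_iff by blast
  then show ?thesis by (intro exI[of _ C]) auto
qed

lemma exp_trunc_bound:
  fixes w :: complex
  shows "norm (exp w - (\<Sum>k<K. w ^ k / fact k)) \<le> norm w ^ K * exp (norm w)"
proof -
  have s: "summable (\<lambda>n. w ^ n / fact n)"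
    using summable_exp_generic[of w] by (simp add: divide_inverse scaleR_conv_of_real mult.commute)
  have e: "exp w = (\<Sum>n. w ^ n / fact n)"
    unfolding exp_def by (simp add: divide_inverse scaleR_conv_of_real mult.commute)
  have "exp w - (\<Sum>k<K. w ^ k / fact k) = (\<Sum>n. w ^ (n + K) / fact (n + K))"
    unfolding e using suminf_split_initial_segment[OF s, of K] by simp
  also have "norm \<dots> \<le> (\<Sum>n. norm w ^ (n + K) / fact (n + K))"
  proof -
    have nn: "\<And>n. norm (w ^ (n + K) / fact (n + K)) = norm w ^ (n + K) / fact (n + K)"
      by (simp add: norm_divide norm_power)
    have sr: "summable (\<lambda>n. norm w ^ n / fact n)"
      using summable_exp_generic[of "norm w"] by (simp add: divide_inverse mult.commute)
    have sr2: "summable (\<lambda>n. norm w ^ (n + K) / fact (n + K))"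
      using summable_iff_shift[of "\<lambda>n. norm w ^ n / fact n" K] sr by simp
    show ?thesis
      using summable_norm[of "\<lambda>n. w ^ (n + K) / fact (n + K)"] sr2 unfolding nn by simp
  qed
  also have "\<dots> \<le> (\<Sum>n. norm w ^ K * (norm w ^ n / fact n))"
  proof (rule suminf_le)
    fix n
    have "fact n \<le> (fact (n + K) :: real)" by (intro fact_mono) simp
    then have "norm w ^ n / fact (n + K) \<le> norm w ^ n / fact n"
      by (intro divide_left_mono) auto
    then have ineq: "norm w ^ n / fact (n + K) \<le> norm w ^ n / fact n" .
    have "norm w ^ (n + K) / fact (n + K) = norm w ^ K * (norm w ^ n / fact (n + K))"
      by (simp add: power_add field_simps)
    also have "\<dots> \<le> norm w ^ K * (norm w ^ n / fact n)"
      by (rule mult_left_mono) (use ineq in auto)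
    finally show "norm w ^ (n + K) / fact (n + K) \<le> norm w ^ K * (norm w ^ n / fact n)" .
  next
    have sr: "summable (\<lambda>n. norm w ^ n / fact n)"
      using summable_exp_generic[of "norm w"] by (simp add: divide_inverse mult.commute)
    then show "summable (\<lambda>n. norm w ^ (n + K) / fact (n + K))"
      using summable_iff_shift[of "\<lambda>n. norm w ^ n / fact n" K] by simp
    show "summable (\<lambda>n. norm w ^ K * (norm w ^ n / fact n))"
      using sr by (intro summable_mult)
  qed
  also have "\<dots> = norm w ^ K * exp (norm w)"
  proof -
    have sr: "summable (\<lambda>n. norm w ^ n / fact n)"
      using summable_exp_generic[of "norm w"] by (simp add: divide_inverse mult.commute)
    have "exp (norm w) = (\<Sum>n. norm w ^ n / fact n)"
      unfolding exp_def by (simp add: divide_inverse mult.commute)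
    then show ?thesis using suminf_mult[OF sr, of "norm w ^ K"] by simp
  qed
  finally show ?thesis .
qed

lemma ln_Gf:
  fixes s :: real
  assumes s: "\<bar>s\<bar> < 1"
  shows "complex_of_real (ln (1 + s) - s + s^2 / 2) = (complex_of_real s)^2 * eval_fps Gf (complex_of_real s)"
proof -
  define z where "z = complex_of_real s"
  have nz: "norm z < 1" using s by (simp add: z_def)
  define f where "f = (\<lambda>n. - ((-z)^n) / of_nat n)"
  have "f sums ln (1 + z)" unfolding f_def using nz by (rule Ln_series')
  then have "(\<lambda>n. f (n + 2)) sums (ln (1 + z) - (\<Sum>i<2. f i))"
    using sums_iff_shift[of f 2 "ln (1 + z) - (\<Sum>i<2. f i)"] by simp
  moreover have "(\<Sum>i<2. f i) = z" by (simp add: f_def eval_nat_numeral)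
  ultimately have s1: "(\<lambda>n. f (n + 2)) sums (ln (1 + z) - z)" by simp
  have s2: "(\<lambda>n. if n = 0 then z^2 / 2 else 0) sums (z^2 / 2)"
    using sums_single[of 0 "\<lambda>_. z^2 / 2"] by simp
  have s3: "(\<lambda>n. f (n + 2) + (if n = 0 then z^2 / 2 else 0)) sums (ln (1 + z) - z + z^2 / 2)"
    using sums_add[OF s1 s2] by simp
  have "ereal (norm z) < 1" using nz by simp
  then have rad: "ereal (norm z) < fps_conv_radius Gf"
    using Gf_radius by (rule order.strict_trans2)
  have s4: "(\<lambda>n. z^2 * (fps_nth Gf n * z ^ n)) sums (z^2 * eval_fps Gf z)"
    by (rule sums_mult[OF sums_eval_fps[OF rad]])
  have eq: "z^2 * (fps_nth Gf n * z ^ n) = f (n + 2) + (if n = 0 then z^2 / 2 else 0)" for n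
  proof (cases "n = 0")
    case True then show ?thesis by (simp add: f_def Gf_def power2_eq_square)
  next
    case False
    show ?thesis using False
      by (simp add: f_def Gf_def power_add power2_eq_square field_simps power_minus[of z])
  qed
  have "z^2 * eval_fps Gf z = ln (1 + z) - z + z^2 / 2"
    using s4 s3 unfolding eq by (rule sums_unique2)
  moreover have "ln (1 + z) = complex_of_real (ln (1 + s))"
    using s Ln_of_real[of "1 + s"] by (simp add: z_def)
  ultimately show ?thesis by (simp add: z_def)
qed

definition Iint :: "complex \<Rightarrow> real \<Rightarrow> real \<Rightarrow> complex" where
  "Iint v N s = (if s > -1 then exp (v * complex_of_real (ln (1 + s)) - complex_of_real (N * (s - ln (1 + s)))) else 0)"

definition Tpoly :: "complex \<Rightarrow> nat \<Rightarrow> real \<Rightarrow> real \<Rightarrow> complex" where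
  "Tpoly v R N s = (\<Sum>k<2*R. \<Sum>m<2*R. fps_nth (fps_binomial v * Gf ^ k) m * complex_of_real (N ^ k * s ^ (2*k+m) / fact k))"

lemma rad_half:
  assumes "fps_conv_radius f \<ge> 1" "norm z \<le> 1/2"
  shows "ereal (norm z) < fps_conv_radius f"
proof -
  have "ereal (norm z) < 1" using assms(2) by simp
  also have "\<dots> \<le> fps_conv_radius f" by (rule assms(1))
  finally show ?thesis .
qed

lemma local_bound_pointwise:
  fixes v :: complex and s N CG CW CB :: real
  assumes CG: "\<forall>z. norm z \<le> 1/2 \<longrightarrow> norm (eval_fps (fps_shift 1 Gf) z) \<le> CG"
    and CW: "\<forall>k<2*R. \<forall>z. norm z \<le> 1/2 \<longrightarrow> norm (eval_fps (fps_shift (2*R) (fps_binomial v * Gf ^ k)) z) \<le> CW"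
    and CB: "\<forall>z. norm z \<le> 1/2 \<longrightarrow> norm (eval_fps (fps_binomial v) z) \<le> CB"
    and s: "\<bar>s\<bar> \<le> 1/2" "CG * \<bar>s\<bar> \<le> 1/4" and N: "N \<ge> 0"
  shows "norm (Iint v N s - complex_of_real (exp (-N* s^2/2)) * Tpoly v R N s)
     \<le> CW * (\<Sum>k<2*R. N^k * s^(2*k+2*R) * exp (-N* s^2/2)) + CB * CG^(2*R) * (N^(2*R) * s^(6*R) * exp (-N* s^2/4))"
proof -
  define z where "z = complex_of_real s"
  have nz: "norm z \<le> 1/2" using s by (simp add: z_def)
  define B where "B = eval_fps (fps_binomial v) z"
  define G where "G = eval_fps Gf z"
  define W where "W = (\<lambda>k. eval_fps (fps_shift (2*R) (fps_binomial v * Gf ^ k)) z)"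
  define y where "y = N * s^2"
  define w where "w = complex_of_real y * G"
  define g where "g = exp (-N* s^2/2)"
  have y0: "y \<ge> 0" using N by (simp add: y_def)
  have radG: "ereal (norm z) < fps_conv_radius Gf" by (rule rad_half[OF Gf_radius nz])
  have radB: "ereal (norm z) < fps_conv_radius (fps_binomial v)" by (rule rad_half[OF binomial_radius nz])
  have radP: "ereal (norm z) < fps_conv_radius (fps_binomial v * Gf ^ k)" for k
    by (rule rad_half[OF P_radius nz])
  have "G = (\<Sum>m<1. fps_nth Gf m * z ^ m) + z ^ 1 * eval_fps (fps_shift 1 Gf) z"
    unfolding G_def by (rule eval_fps_split[OF radG])
  then have Gz: "G = z * eval_fps (fps_shift 1 Gf) z" by (simp add: Gf_def)
  have e1: "norm (eval_fps (fps_shift 1 Gf) z) \<le> CG" using CG nz by blast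
  have "norm G = \<bar>s\<bar> * norm (eval_fps (fps_shift 1 Gf) z)" unfolding Gz by (simp add: norm_mult z_def)
  also have "\<dots> \<le> \<bar>s\<bar> * CG" by (rule mult_left_mono[OF e1 abs_ge_zero])
  finally have normG: "norm G \<le> CG * \<bar>s\<bar>" by (simp add: mult.commute)
  have normw: "norm w \<le> y * (CG * \<bar>s\<bar>)"
    unfolding w_def using y0 normG by (simp add: norm_mult mult_left_mono)
  have normw2: "norm w \<le> y / 4"
  proof -
    have "y * (CG * \<bar>s\<bar>) \<le> y * (1/4)" using s(2) y0 by (rule mult_left_mono)
    then show ?thesis using normw by simp
  qed
  have s1: "s > -1" "\<bar>s\<bar> < 1" using s by auto
  have lnG: "complex_of_real (ln (1 + s) - s + s^2 / 2) = z^2 * G"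
    unfolding z_def G_def by (rule ln_Gf[OF s1(2)])
  have Bexp: "B = exp (v * complex_of_real (ln (1 + s)))"
  proof -
    have "norm z < 1" using nz by simp
    then have "B = (1 + z) powr v" unfolding B_def by (rule eval_fps_binomial)
    also have "1 + z = complex_of_real (1 + s)" by (simp add: z_def)
    also have "complex_of_real (1 + s) powr v = exp (v * ln (complex_of_real (1 + s)))"
    proof -
      have ne: "complex_of_real (1 + s) \<noteq> 0" using s1 by (simp only: of_real_eq_0_iff)
      show ?thesis unfolding powr_def by (rule if_not_P[OF ne])
    qed
    also have "ln (complex_of_real (1 + s)) = complex_of_real (ln (1 + s))"
      by (rule Ln_of_real) (use s1 in simp)
    finally show ?thesis .
  qed
  have Ieq: "Iint v N s = B * complex_of_real g * exp w"
  proof -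
    have "v * complex_of_real (ln (1 + s)) - complex_of_real (N * (s - ln (1 + s))) =
          v * complex_of_real (ln (1 + s)) + complex_of_real (-N* s^2/2) + complex_of_real N * complex_of_real (ln (1 + s) - s + s^2 / 2)"
      by (simp add: algebra_simps)
    also have "complex_of_real N * complex_of_real (ln (1 + s) - s + s^2 / 2) = w"
      unfolding lnG w_def y_def by (simp add: z_def)
    finally have ex: "v * complex_of_real (ln (1 + s)) - complex_of_real (N * (s - ln (1 + s))) =
          v * complex_of_real (ln (1 + s)) + complex_of_real (-N* s^2/2) + w" .
    have "Iint v N s = exp (v * complex_of_real (ln (1 + s)) + complex_of_real (-N* s^2/2) + w)"
      unfolding Iint_def by (simp only: if_P[OF s1(1)] ex)
    also have "\<dots> = B * complex_of_real g * exp w"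
      by (simp only: exp_add Bexp g_def exp_of_real)
    finally show ?thesis .
  qed
  have Psplit: "(\<Sum>m<2*R. fps_nth (fps_binomial v * Gf ^ k) m * z ^ m) = B * G ^ k - z ^ (2*R) * W k" for k
  proof -
    have "eval_fps (fps_binomial v * Gf ^ k) z = (\<Sum>m<2*R. fps_nth (fps_binomial v * Gf ^ k) m * z ^ m) + z ^ (2*R) * W k"
      unfolding W_def by (rule eval_fps_split[OF radP])
    moreover have "eval_fps (fps_binomial v * Gf ^ k) z = B * G ^ k"
    proof -
      have "norm z < fps_conv_radius (Gf ^ k)"
        using radG fps_conv_radius_power[of Gf k] by (meson order.strict_trans2)
      then show ?thesis
        unfolding B_def G_def using radB radG by (simp add: eval_fps_mult eval_fps_power)
    qed
    ultimately show ?thesis by (simp add: algebra_simps)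
  qed
  have Teq: "Tpoly v R N s = (\<Sum>k<2*R. complex_of_real y ^ k / fact k * (B * G ^ k - z ^ (2*R) * W k))"
  proof -
    have "Tpoly v R N s = (\<Sum>k<2*R. complex_of_real y ^ k / fact k * (\<Sum>m<2*R. fps_nth (fps_binomial v * Gf ^ k) m * z ^ m))"
      unfolding Tpoly_def sum_distrib_left
    proof (intro sum.cong refl)
      fix k m
      have "N ^ k * s ^ (2*k+m) / fact k = y ^ k / fact k * s ^ m"
        by (simp add: y_def power_add power_mult power_mult_distrib)
      then have "complex_of_real (N ^ k * s ^ (2*k+m) / fact k) = complex_of_real (y ^ k / fact k * s ^ m)"
        by (simp only:)
      also have "\<dots> = complex_of_real y ^ k / fact k * z ^ m" by (simp add: z_def)
      finally have "complex_of_real (N ^ k * s ^ (2*k+m) / fact k) = complex_of_real y ^ k / fact k * z ^ m" .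
      then show "fps_nth (fps_binomial v * Gf ^ k) m * complex_of_real (N ^ k * s ^ (2*k+m) / fact k) =
          complex_of_real y ^ k / fact k * (fps_nth (fps_binomial v * Gf ^ k) m * z ^ m)"
        by simp
    qed
    then show ?thesis unfolding Psplit .
  qed
  have wk: "complex_of_real y ^ k * G ^ k = w ^ k" for k
    by (simp add: w_def power_mult_distrib)
  have Tsplit: "Tpoly v R N s = B * (\<Sum>k<2*R. w ^ k / fact k) - (\<Sum>k<2*R. complex_of_real y ^ k / fact k * z ^ (2*R) * W k)"
  proof -
    have "complex_of_real y ^ k / fact k * (B * G ^ k - z ^ (2*R) * W k) =
          B * (w ^ k / fact k) - complex_of_real y ^ k / fact k * z ^ (2*R) * W k" for k
      unfolding wk[symmetric] by (simp add: algebra_simps)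
    note eqk = this
    show ?thesis unfolding Teq eqk sum_subtractf sum_distrib_left by (rule refl)
  qed
  have diff: "Iint v N s - complex_of_real g * Tpoly v R N s =
      complex_of_real g * (B * (exp w - (\<Sum>k<2*R. w ^ k / fact k))) +
      complex_of_real g * (\<Sum>k<2*R. complex_of_real y ^ k / fact k * z ^ (2*R) * W k)"
    unfolding Ieq Tsplit by (simp add: algebra_simps)
  have g0: "g > 0" by (simp add: g_def)
  have normB: "norm B \<le> CB" using CB nz by (simp add: B_def)
  have CB0: "CB \<ge> 0" using normB norm_ge_zero order_trans by blast
  have t1: "norm (complex_of_real g * (B * (exp w - (\<Sum>k<2*R. w ^ k / fact k))))
      \<le> CB * CG^(2*R) * (N^(2*R) * s^(6*R) * exp (-N* s^2/4))"
  proof -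
    have "norm (complex_of_real g * (B * (exp w - (\<Sum>k<2*R. w ^ k / fact k))))
        = g * norm B * norm (exp w - (\<Sum>k<2*R. w ^ k / fact k))"
      using g0 by (simp add: norm_mult)
    also have "\<dots> \<le> g * CB * (norm w ^ (2*R) * exp (norm w))"
      using g0 normB CB0 exp_trunc_bound[of w "2*R"]
      by (intro mult_mono mult_left_mono) auto
    also have "\<dots> \<le> g * CB * ((y * (CG * \<bar>s\<bar>)) ^ (2*R) * exp (y / 4))"
    proof -
      have "norm w ^ (2*R) \<le> (y * (CG * \<bar>s\<bar>)) ^ (2*R)"
        using normw by (intro power_mono) auto
      moreover have "exp (norm w) \<le> exp (y / 4)" using normw2 by simp
      ultimately show ?thesis
        using g0 normB CB0 nz by (intro mult_left_mono mult_mono) (auto intro!: mult_nonneg_nonneg)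
    qed
    also have "\<dots> = CB * CG^(2*R) * (N^(2*R) * s^(6*R) * (g * exp (y / 4)))"
    proof -
      have "(y * (CG * \<bar>s\<bar>)) ^ (2*R) = CG^(2*R) * (N^(2*R) * s^(6*R))"
      proof -
        have a: "\<bar>s\<bar> ^ (2*R) = s ^ (2*R)" by (simp add: power_even_abs)
        have b: "(y * (CG * \<bar>s\<bar>)) ^ (2*R) = CG^(2*R) * (N^(2*R) * ((s^2)^(2*R) * \<bar>s\<bar>^(2*R)))"
          by (simp add: y_def power_mult_distrib mult_ac)
        have ex: "2*(2*R) + 2*R = 6*R" by simp
        have c: "(s^2)^(2*R) * s^(2*R) = s^(6*R)"
          unfolding power_mult[symmetric] power_add[symmetric] ex ..
        show ?thesis unfolding b a c ..
      qed
      then show ?thesis by (simp add: mult_ac)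
    qed
    also have "g * exp (y / 4) = exp (-N* s^2/4)"
      by (simp add: g_def y_def exp_add[symmetric])
    finally show ?thesis .
  qed
  have t2: "norm (complex_of_real g * (\<Sum>k<2*R. complex_of_real y ^ k / fact k * z ^ (2*R) * W k))
      \<le> CW * (\<Sum>k<2*R. N^k * s^(2*k+2*R) * exp (-N* s^2/2))"
  proof -
    have "norm (complex_of_real g * (\<Sum>k<2*R. complex_of_real y ^ k / fact k * z ^ (2*R) * W k))
        = g * norm (\<Sum>k<2*R. complex_of_real y ^ k / fact k * z ^ (2*R) * W k)"
      using g0 by (simp add: norm_mult)
    also have "\<dots> \<le> g * (\<Sum>k<2*R. norm (complex_of_real y ^ k / fact k * z ^ (2*R) * W k))"
      by (intro mult_left_mono norm_sum) (use g0 in auto)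
    also have "\<dots> \<le> g * (\<Sum>k<2*R. CW * (N^k * s^(2*k+2*R)))"
    proof (intro mult_left_mono sum_mono)
      fix k assume k: "k \<in> {..<2*R}"
      have "norm (complex_of_real y ^ k / fact k * z ^ (2*R) * W k) = y ^ k / fact k * s ^ (2*R) * norm (W k)"
        using y0 by (simp add: norm_mult norm_divide norm_power z_def power_even_abs)
      also have "\<dots> \<le> y ^ k * s ^ (2*R) * CW"
      proof -
        have "norm (W k) \<le> CW" using CW k nz by (simp add: W_def)
        moreover have "y ^ k / fact k \<le> y ^ k"
        proof -
          have "y ^ k / fact k \<le> y ^ k / 1"
            by (rule divide_left_mono) (use y0 in \<open>auto simp: fact_ge_1\<close>)
          then show ?thesis by simp
        qed
        ultimately show ?thesis
          using y0 by (intro mult_mono) (auto simp: zero_le_even_power)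
      qed
      also have "\<dots> = CW * (N^k * s^(2*k+2*R))"
      proof -
        have "(s^2)^k = s^(2*k)" by (simp add: power_mult)
        then show ?thesis by (simp add: y_def power_mult_distrib power_add mult_ac)
      qed
      finally show "norm (complex_of_real y ^ k / fact k * z ^ (2*R) * W k) \<le> CW * (N^k * s^(2*k+2*R))" .
    qed (use g0 in auto)
    also have "\<dots> = CW * (\<Sum>k<2*R. N^k * s^(2*k+2*R) * exp (-N* s^2/2))"
      by (simp add: g_def sum_distrib_left mult_ac)
    finally show ?thesis .
  qed
  have "norm (Iint v N s - complex_of_real g * Tpoly v R N s) \<le>
     CB * CG^(2*R) * (N^(2*R) * s^(6*R) * exp (-N * s^2/4)) + CW * (\<Sum>k<2*R. N^k * s^(2*k+2*R) * exp (-N * s^2/2))"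
    unfolding diff by (rule order.trans[OF norm_triangle_ineq add_mono[OF t1 t2]])
  then show ?thesis unfolding g_def by (simp only: add.commute)
qed

lemma Iint_Gamma:
  fixes v :: complex and N :: real
  assumes N: "N > 0" and re: "N + Re v + 1 > 0"
  shows "has_bochner_integral lebesgue (Iint v N)
           (Gamma (complex_of_real N + v + 1) /
             (complex_of_real N * (exp ((complex_of_real N + v) * complex_of_real (ln N)) / complex_of_real (exp N))))"
proof -
  define z where "z = complex_of_real N + v + 1"
  have rez: "Re z > 0" using re by (simp add: z_def)
  define f where "f = (\<lambda>t::real. complex_of_real t powr (z - 1) / complex_of_real (exp t))"
  have si: "set_integrable lebesgue {0<..} f"
    unfolding f_def by (rule absolutely_integrable_Gamma_integral'[OF rez])
  have hi: "(f has_integral Gamma z) {0<..}"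
    unfolding f_def by (rule Gamma_integral_complex'[OF rez])
  have "(LINT t:{0<..}|lebesgue. f t) = integral {0<..} f"
    by (rule set_lebesgue_integral_eq_integral(2)[OF si])
  also have "\<dots> = Gamma z" using hi by (rule integral_unique)
  finally have li: "(LINT t:{0<..}|lebesgue. f t) = Gamma z" .
  have hb: "has_bochner_integral lebesgue (\<lambda>t. indicator {0<..} t *\<^sub>R f t) (Gamma z)"
    using si li unfolding set_integrable_def set_lebesgue_integral_def
    by (simp add: has_bochner_integral_iff)
  have hb2: "has_bochner_integral lebesgue (\<lambda>s. indicator {0<..} (N + N * s) *\<^sub>R f (N + N * s)) (Gamma z /\<^sub>R \<bar>N\<bar>)"
    using hb has_bochner_integral_lebesgue_real_affine_iff[of N "\<lambda>t. indicator {0<..} t *\<^sub>R f t" "Gamma z" N] N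
    by simp
  define c where "c = exp ((complex_of_real N + v) * complex_of_real (ln N)) / complex_of_real (exp N)"
  have c0: "c \<noteq> 0" by (simp add: c_def)
  have feq: "indicator {0<..} (N + N * s) *\<^sub>R f (N + N * s) = c * Iint v N s" for s
  proof (cases "s > -1")
    case False
    then have "N * s \<le> N * (-1)" using N by (intro mult_left_mono) auto
    then have "N + N * s \<le> 0" by simp
    then show ?thesis using False by (simp add: Iint_def indicator_def)
  next
    case True
    have t: "N + N * s = N * (1 + s)" by (simp add: algebra_simps)
    have pos: "N * (1 + s) > 0" using True N by simp
    have lnt: "ln (N * (1 + s)) = ln N + ln (1 + s)" using True N by (simp add: ln_mult)
    have ne: "complex_of_real (N * (1 + s)) \<noteq> 0" using pos by (simp only: of_real_eq_0_iff)
    have "f (N + N * s) = complex_of_real (N * (1 + s)) powr (z - 1) / complex_of_real (exp (N * (1 + s)))"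
      by (simp only: f_def t)
    also have "complex_of_real (N * (1 + s)) powr (z - 1) = exp ((z - 1) * ln (complex_of_real (N * (1 + s))))"
      unfolding powr_def by (rule if_not_P[OF ne])
    also have "complex_of_real (exp (N * (1 + s))) = exp (complex_of_real (N * (1 + s)))"
      by (rule exp_of_real[symmetric])
    finally have "f (N + N * s) = exp ((z - 1) * ln (complex_of_real (N * (1 + s)))) / exp (complex_of_real (N * (1 + s)))" .
    also have "ln (complex_of_real (N * (1 + s))) = complex_of_real (ln N + ln (1 + s))"
      using Ln_of_real[OF pos] lnt by simp
    also have "exp ((z - 1) * complex_of_real (ln N + ln (1 + s))) / exp (complex_of_real (N * (1 + s)))
       = exp ((z - 1) * complex_of_real (ln N + ln (1 + s)) - complex_of_real (N * (1 + s)))"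
      by (simp add: exp_diff)
    also have "(z - 1) * complex_of_real (ln N + ln (1 + s)) - complex_of_real (N * (1 + s)) =
       ((complex_of_real N + v) * complex_of_real (ln N) - complex_of_real N) +
       (v * complex_of_real (ln (1 + s)) - complex_of_real (N * (s - ln (1 + s))))"
      by (simp add: z_def algebra_simps)
    also have "exp \<dots> = c * Iint v N s"
      using True by (simp add: exp_add exp_diff c_def Iint_def exp_of_real)
    finally show ?thesis using pos t by (simp add: indicator_def)
  qed
  have hb3: "has_bochner_integral lebesgue (\<lambda>s. c * Iint v N s) (Gamma z /\<^sub>R \<bar>N\<bar>)"
    using hb2 unfolding feq .
  have "has_bochner_integral lebesgue (\<lambda>s. c * Iint v N s * inverse c) (Gamma z /\<^sub>R \<bar>N\<bar> * inverse c)"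
    using hb3 by (rule has_bochner_integral_mult_left)
  moreover have "(\<lambda>s. c * Iint v N s * inverse c) = Iint v N" using c0 by (simp add: fun_eq_iff)
  moreover have "Gamma z /\<^sub>R \<bar>N\<bar> * inverse c = Gamma z / (complex_of_real N * c)"
    using N c0 by (simp add: scaleR_conv_of_real field_simps)
  ultimately show ?thesis by (simp add: z_def c_def)
qed

lemma Iint_integrable:
  assumes "N > 0" "N + Re v + 1 > 0"
  shows "integrable lebesgue (Iint v N)"
  using Iint_Gamma[OF assms] by (rule integrable.intros)

lemma Iint_norm:
  "norm (Iint v N s) = (if s > -1 then exp (Re v * ln (1 + s) - N * (s - ln (1 + s))) else 0)"
  by (simp add: Iint_def)

lemma phi_tail:
  fixes \<delta> s :: real
  assumes d: "0 < \<delta>" "\<delta> < 1" and s: "s > -1" "\<bar>s\<bar> \<ge> \<delta>"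
  shows "s - ln (1 + s) \<ge> min (\<delta> - ln (1 + \<delta>)) (-\<delta> - ln (1 - \<delta>))"
proof (cases "s \<ge> 0")
  case True
  then have sd: "s \<ge> \<delta>" using s by simp
  have "ln ((1 + s) / (1 + \<delta>)) \<le> (1 + s) / (1 + \<delta>) - 1"
    by (rule ln_le_minus_one) (use s d in simp)
  moreover have "ln ((1 + s) / (1 + \<delta>)) = ln (1 + s) - ln (1 + \<delta>)"
    using s d by (simp add: ln_div)
  moreover have "(1 + s) / (1 + \<delta>) - 1 = (s - \<delta>) / (1 + \<delta>)" using d by (simp add: field_simps)
  moreover have "(s - \<delta>) / (1 + \<delta>) \<le> s - \<delta>"
  proof -
    have "(s - \<delta>) / (1 + \<delta>) \<le> (s - \<delta>) / 1"
      by (rule divide_left_mono) (use sd d in auto)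
    then show ?thesis by simp
  qed
  ultimately have "s - ln (1 + s) \<ge> \<delta> - ln (1 + \<delta>)" by linarith
  then show ?thesis by simp
next
  case False
  then have sd: "s \<le> -\<delta>" using s by simp
  have "ln ((1 + s) / (1 - \<delta>)) \<le> (1 + s) / (1 - \<delta>) - 1"
    by (rule ln_le_minus_one) (use s d in simp)
  moreover have "ln ((1 + s) / (1 - \<delta>)) = ln (1 + s) - ln (1 - \<delta>)"
    using s d by (simp add: ln_div)
  moreover have "(1 + s) / (1 - \<delta>) - 1 = (s + \<delta>) / (1 - \<delta>)" using d by (simp add: field_simps)
  moreover have "(s + \<delta>) / (1 - \<delta>) \<le> s + \<delta>"
  proof -
    have "(s + \<delta>) * 1 \<le> (s + \<delta>) * (1 - \<delta>)"
      using sd d by (intro mult_left_mono_neg) auto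
    then show ?thesis using d by (simp add: divide_le_eq)
  qed
  ultimately have "s - ln (1 + s) \<ge> -\<delta> - ln (1 - \<delta>)" by linarith
  then show ?thesis by simp
qed

lemma phi_pos:
  fixes \<delta> :: real
  assumes d: "0 < \<delta>" "\<delta> < 1"
  shows "min (\<delta> - ln (1 + \<delta>)) (-\<delta> - ln (1 - \<delta>)) > 0"
proof -
  have a: "ln (1 + \<delta>) < \<delta>" using d by (intro ln_add_one_self_less_self)
  have b1: "ln (1 - \<delta>/2) \<le> (1 - \<delta>/2) - 1" by (rule ln_le_minus_one) (use d in simp)
  have b2: "ln ((1 - \<delta>) / (1 - \<delta>/2)) \<le> (1 - \<delta>) / (1 - \<delta>/2) - 1" by (rule ln_le_minus_one) (use d in simp)
  have b3: "ln ((1 - \<delta>) / (1 - \<delta>/2)) = ln (1 - \<delta>) - ln (1 - \<delta>/2)" using d by (simp add: ln_div)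
  have b4: "(1 - \<delta>) / (1 - \<delta>/2) - 1 < -\<delta>/2"
  proof -
    have "(1 - \<delta>) / (1 - \<delta>/2) - 1 = -(\<delta>/2) / (1 - \<delta>/2)" using d by (simp add: field_simps)
    also have "\<dots> < -\<delta>/2"
    proof -
      have "\<delta>/2 < (\<delta>/2) / (1 - \<delta>/2)" using d by (simp add: field_simps)
      then show ?thesis by simp
    qed
    finally show ?thesis .
  qed
  have "ln (1 - \<delta>) < -\<delta>" using b1 b2 b3 b4 by linarith
  then show ?thesis using a by simp
qed

lemma Iint_tail:
  fixes \<delta> :: real
  assumes d: "0 < \<delta>" "\<delta> < 1" and s: "\<bar>s\<bar> \<ge> \<delta>" and N: "N \<ge> N0"
  shows "norm (Iint v N s) \<le> exp (-(N - N0) * min (\<delta> - ln (1 + \<delta>)) (-\<delta> - ln (1 - \<delta>))) * norm (Iint v N0 s)"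
proof (cases "s > -1")
  case True
  define c where "c = min (\<delta> - ln (1 + \<delta>)) (-\<delta> - ln (1 - \<delta>))"
  have "s - ln (1 + s) \<ge> c" unfolding c_def by (rule phi_tail[OF d True s])
  then have "(N - N0) * c \<le> (N - N0) * (s - ln (1 + s))" using N by (intro mult_left_mono) auto
  then have "Re v * ln (1 + s) - N * (s - ln (1 + s)) \<le> -(N - N0) * c + (Re v * ln (1 + s) - N0 * (s - ln (1 + s)))"
    by (simp add: algebra_simps)
  then have "exp (Re v * ln (1 + s) - N * (s - ln (1 + s))) \<le> exp (-(N - N0) * c) * exp (Re v * ln (1 + s) - N0 * (s - ln (1 + s)))"
    by (simp add: exp_add[symmetric])
  then show ?thesis using True by (simp add: Iint_norm c_def)
next
  case False
  then show ?thesis by (simp add: Iint_norm)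
qed

lemma int_lebesgue:
  fixes f :: "real \<Rightarrow> 'a::{banach, second_countable_topology}"
  assumes "integrable lborel f"
  shows "integrable lebesgue f"
  using assms integrable_completion[OF borel_measurable_integrable[OF assms]] by simp

lemma gauss_abs_integrable: "integrable lebesgue (\<lambda>s::real. exp (- (s^2) / 2) * \<bar>s\<bar> ^ p)"
proof -
  have "integrable lborel (\<lambda>x. normal_density 0 1 x * \<bar>x - 0\<bar> ^ p)"
    by (rule integrable_normal_moment_abs) simp
  then have A: "integrable lborel (\<lambda>x. sqrt (2 * pi) * (normal_density 0 1 x * \<bar>x - 0\<bar> ^ p))"
    by (rule integrable_mult_right)
  have EQ: "(\<lambda>x. sqrt (2 * pi) * (normal_density 0 1 x * \<bar>x - 0\<bar> ^ p)) = (\<lambda>s::real. exp (- (s^2) / 2) * \<bar>s\<bar> ^ p)"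
    by (simp add: normal_density_def fun_eq_iff)
  have "integrable lborel (\<lambda>s::real. exp (- (s^2) / 2) * \<bar>s\<bar> ^ p)" using A unfolding EQ .
  then show ?thesis by (rule int_lebesgue)
qed

lemma gauss_tail:
  fixes N \<delta> s :: real
  assumes "N \<ge> 1" "\<bar>s\<bar> \<ge> \<delta>" "\<delta> \<ge> 0"
  shows "exp (-N * s^2 / 2) \<le> exp (-(N - 1) * \<delta>^2 / 2) * exp (- (s^2) / 2)"
proof -
  have "\<delta>^2 \<le> \<bar>s\<bar>^2" by (rule power_mono) (use assms in auto)
  then have "\<delta>^2 \<le> s^2" by simp
  then have "(N - 1) * \<delta>^2 \<le> (N - 1) * s^2" using assms by (intro mult_left_mono) auto
  then have "-N * s^2 / 2 \<le> -(N - 1) * \<delta>^2 / 2 + - (s^2) / 2" by (simp add: algebra_simps)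
  then show ?thesis by (simp add: exp_add[symmetric])
qed

lemma sum_even_odd:
  fixes R :: nat and f :: "nat \<Rightarrow> 'a::comm_monoid_add"
  shows "(\<Sum>m<2*R. f m) = (\<Sum>r<R. f (2*r) + f (2*r+1))"
  by (induction R) (simp_all add: add.assoc)

lemma gT_integral:
  fixes v :: complex and N :: real
  assumes N: "N > 0"
  shows "has_bochner_integral lebesgue (\<lambda>s. complex_of_real (exp (-N * s^2/2)) * Tpoly v R N s)
     (\<Sum>k<2*R. \<Sum>m<2*R. fps_nth (fps_binomial v * Gf ^ k) m * complex_of_real (N^k / fact k * gmom N (2*k+m)))"
proof -
  have "has_bochner_integral lebesgue (\<lambda>s. \<Sum>k<2*R. \<Sum>m<2*R. fps_nth (fps_binomial v * Gf ^ k) m *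
           complex_of_real (N^k / fact k * (exp (-N * s^2/2) * s ^ (2*k+m))))
     (\<Sum>k<2*R. \<Sum>m<2*R. fps_nth (fps_binomial v * Gf ^ k) m * complex_of_real (N^k / fact k * gmom N (2*k+m)))"
  proof (intro has_bochner_integral_sum has_bochner_integral_mult_right)
    fix k m
    have "has_bochner_integral lebesgue (\<lambda>s. N^k / fact k * (exp (-N * s^2/2) * s ^ (2*k+m))) (N^k / fact k * gmom N (2*k+m))"
      by (intro has_bochner_integral_mult_right gauss_mom[OF N])
    then show "has_bochner_integral lebesgue (\<lambda>s. complex_of_real (N^k / fact k * (exp (-N * s^2/2) * s ^ (2*k+m))))
               (complex_of_real (N^k / fact k * gmom N (2*k+m)))"
      by (rule has_bochner_integral_of_real)
  qed
  moreover have "(\<lambda>s. \<Sum>k<2*R. \<Sum>m<2*R. fps_nth (fps_binomial v * Gf ^ k) m *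
           complex_of_real (N^k / fact k * (exp (-N * s^2/2) * s ^ (2*k+m)))) =
        (\<lambda>s. complex_of_real (exp (-N * s^2/2)) * Tpoly v R N s)"
    by (simp add: fun_eq_iff Tpoly_def sum_distrib_left mult_ac)
  ultimately show ?thesis by simp
qed

lemma gT_value:
  fixes v :: complex and N :: real
  assumes N: "N > 0"
  shows "(\<Sum>k<2*R. \<Sum>m<2*R. fps_nth (fps_binomial v * Gf ^ k) m * complex_of_real (N^k / fact k * gmom N (2*k+m)))
     = complex_of_real (sqrt (2 * pi / N)) * (\<Sum>r<R. gamma_coeff r v / complex_of_real N ^ r)"
proof -
  define c where "c = (\<lambda>k m. fps_nth (fps_binomial v * Gf ^ k) m)"
  have odd0: "odd p \<Longrightarrow> gmom N p = 0" for p by (simp add: gmom_def)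
  have ev: "complex_of_real (N^k / fact k * gmom N (2*k + 2*r)) =
      complex_of_real (sqrt (2 * pi / N)) * (of_nat (dfact (2 * int r + 2 * int k - 1)) / fact k) / complex_of_real N ^ r" for k r
  proof -
    have e: "even (2*k + 2*r)" by simp
    have d: "(2*k + 2*r) div 2 = k + r" by simp
    have i: "int (2*k + 2*r) - 1 = 2 * int r + 2 * int k - 1" by simp
    have "N^k / fact k * gmom N (2*k + 2*r) = sqrt (2 * pi / N) * (real (dfact (2 * int r + 2 * int k - 1)) / fact k) / N ^ r"
      unfolding gmom_def using N by (simp only: e d i if_True) (simp add: power_add field_simps)
    then show ?thesis by simp
  qed
  have "(\<Sum>k<2*R. \<Sum>m<2*R. c k m * complex_of_real (N^k / fact k * gmom N (2*k+m)))
      = (\<Sum>k<2*R. \<Sum>r<R. c k (2*r) * complex_of_real (N^k / fact k * gmom N (2*k+2*r)))"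
  proof (rule sum.cong[OF refl])
    fix k
    show "(\<Sum>m<2*R. c k m * complex_of_real (N^k / fact k * gmom N (2*k+m))) =
        (\<Sum>r<R. c k (2*r) * complex_of_real (N^k / fact k * gmom N (2*k+2*r)))"
      by (subst sum_even_odd) (simp add: odd0)
  qed
  also have "\<dots> = (\<Sum>r<R. \<Sum>k<2*R. c k (2*r) * complex_of_real (N^k / fact k * gmom N (2*k+2*r)))"
    by (rule sum.swap)
  also have "\<dots> = (\<Sum>r<R. complex_of_real (sqrt (2 * pi / N)) * (gamma_coeff r v / complex_of_real N ^ r))"
  proof (rule sum.cong[OF refl])
    fix r assume r: "r \<in> {..<R}"
    have gc: "gamma_coeff r v = (\<Sum>k<2*R. of_nat (dfact (2 * int r + 2 * int k - 1)) / fact k * c k (2*r))"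
      unfolding c_def by (rule gamma_coeff_alt) (use r in auto)
    have "(\<Sum>k<2*R. c k (2*r) * complex_of_real (N^k / fact k * gmom N (2*k+2*r))) =
       (\<Sum>k<2*R. complex_of_real (sqrt (2 * pi / N)) / complex_of_real N ^ r * (of_nat (dfact (2 * int r + 2 * int k - 1)) / fact k * c k (2*r)))"
    proof (rule sum.cong[OF refl])
      fix k
      show "c k (2*r) * complex_of_real (N^k / fact k * gmom N (2*k+2*r)) =
         complex_of_real (sqrt (2 * pi / N)) / complex_of_real N ^ r * (of_nat (dfact (2 * int r + 2 * int k - 1)) / fact k * c k (2*r))"
        unfolding ev by (simp add: field_simps)
    qed
    also have "\<dots> = complex_of_real (sqrt (2 * pi / N)) / complex_of_real N ^ r * gamma_coeff r v"
      by (simp only: gc sum_distrib_left)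
    finally show "(\<Sum>k<2*R. c k (2*r) * complex_of_real (N^k / fact k * gmom N (2*k+2*r))) =
        complex_of_real (sqrt (2 * pi / N)) * (gamma_coeff r v / complex_of_real N ^ r)"
      by simp
  qed
  finally show ?thesis by (simp add: c_def sum_distrib_left)
qed

lemma asym1: "c > 0 \<Longrightarrow> (\<lambda>N::real. exp(-(N - a) * c)) \<in> O(\<lambda>N. 1/(N^R * sqrt N))"
  by real_asymp

lemma asym2: "d > 0 \<Longrightarrow> (\<lambda>N::real. exp(-(N - 1) * d^2/2) * N^(2*R)) \<in> O(\<lambda>N. 1/(N^R * sqrt N))"
  by real_asymp

lemma norm_Tpoly:
  assumes N: "N \<ge> 0"
  shows "norm (Tpoly v R N s) \<le> (\<Sum>k<2*R. \<Sum>m<2*R. norm (fps_nth (fps_binomial v * Gf ^ k) m) * (N^k / fact k * \<bar>s\<bar> ^ (2*k+m)))"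
proof -
  have "norm (Tpoly v R N s) \<le> (\<Sum>k<2*R. norm (\<Sum>m<2*R. fps_nth (fps_binomial v * Gf ^ k) m * complex_of_real (N ^ k * s ^ (2*k+m) / fact k)))"
    unfolding Tpoly_def by (rule norm_sum)
  also have "\<dots> \<le> (\<Sum>k<2*R. \<Sum>m<2*R. norm (fps_nth (fps_binomial v * Gf ^ k) m * complex_of_real (N ^ k * s ^ (2*k+m) / fact k)))"
    by (intro sum_mono norm_sum)
  also have "\<dots> = (\<Sum>k<2*R. \<Sum>m<2*R. norm (fps_nth (fps_binomial v * Gf ^ k) m) * (N^k / fact k * \<bar>s\<bar> ^ (2*k+m)))"
  proof (intro sum.cong refl)
    fix k m
    have "norm (complex_of_real (N ^ k * s ^ (2*k+m) / fact k)) = N^k / fact k * \<bar>s\<bar> ^ (2*k+m)"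
      unfolding norm_of_real using N by (simp add: abs_mult power_abs)
    then show "norm (fps_nth (fps_binomial v * Gf ^ k) m * complex_of_real (N ^ k * s ^ (2*k+m) / fact k)) =
       norm (fps_nth (fps_binomial v * Gf ^ k) m) * (N^k / fact k * \<bar>s\<bar> ^ (2*k+m))"
      by (simp only: norm_mult)
  qed
  finally show ?thesis .
qed

lemma gauss_mom_int:
  assumes N: "N > 0"
  shows "has_bochner_integral lebesgue (\<lambda>s. N^k * s^p * exp (-N * s^2/2)) (N^k * gmom N p)"
proof -
  have "has_bochner_integral lebesgue (\<lambda>s. N^k * (exp (-N * s^2/2) * s^p)) (N^k * gmom N p)"
    by (intro has_bochner_integral_mult_right gauss_mom N)
  then show ?thesis by (simp add: mult_ac)
qed

lemma gauss_mom_int4: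
  assumes N: "N > 0"
  shows "has_bochner_integral lebesgue (\<lambda>s. N^k * s^p * exp (-N * s^2/4)) (N^k * gmom (N/2) p)"
proof -
  have "has_bochner_integral lebesgue (\<lambda>s. N^k * (exp (-(N/2) * s^2/2) * s^p)) (N^k * gmom (N/2) p)"
    by (intro has_bochner_integral_mult_right gauss_mom) (use N in simp)
  then show ?thesis by (simp add: mult_ac)
qed

lemma main_estimate:
  fixes v :: complex and R :: nat
  assumes R: "R \<ge> 1"
  shows "\<exists>C. eventually (\<lambda>N. norm (integral\<^sup>L lebesgue (Iint v N) -
            complex_of_real (sqrt (2 * pi / N)) * (\<Sum>r<R. gamma_coeff r v / complex_of_real N ^ r))
          \<le> C * (1 / (N^R * sqrt N))) at_top"
proof -
  define c where "c = (\<lambda>k m. fps_nth (fps_binomial v * Gf ^ k) m)"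
  obtain CG where CG: "\<forall>z. norm z \<le> 1/2 \<longrightarrow> norm (eval_fps (fps_shift 1 Gf) z) \<le> CG"
  proof -
    have "ereal (1/2) < fps_conv_radius (fps_shift 1 Gf)"
      using Gf_radius by (simp add: order.strict_trans2[of _ 1])
    then show ?thesis using eval_fps_bounded that by blast
  qed
  have "\<forall>k. \<exists>C. \<forall>z. norm z \<le> 1/2 \<longrightarrow> norm (eval_fps (fps_shift (2*R) (fps_binomial v * Gf ^ k)) z) \<le> C"
  proof
    fix k
    have "ereal (1/2) < fps_conv_radius (fps_shift (2*R) (fps_binomial v * Gf ^ k))"
      using P_radius[of v k] by (simp add: order.strict_trans2[of _ 1])
    then show "\<exists>C. \<forall>z. norm z \<le> 1/2 \<longrightarrow> norm (eval_fps (fps_shift (2*R) (fps_binomial v * Gf ^ k)) z) \<le> C"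
      by (rule eval_fps_bounded)
  qed
  then obtain CWf where CWf: "\<forall>k z. norm z \<le> 1/2 \<longrightarrow> norm (eval_fps (fps_shift (2*R) (fps_binomial v * Gf ^ k)) z) \<le> CWf k"
    by metis
  define CW where "CW = (\<Sum>k<2*R. \<bar>CWf k\<bar>)"
  have CW0: "CW \<ge> 0" by (simp add: CW_def)
  have CW: "\<forall>k<2*R. \<forall>z. norm z \<le> 1/2 \<longrightarrow> norm (eval_fps (fps_shift (2*R) (fps_binomial v * Gf ^ k)) z) \<le> CW"
  proof (intro allI impI)
    fix k z assume k: "k < 2*R" and z: "norm (z::complex) \<le> 1/2"
    have "CWf k \<le> \<bar>CWf k\<bar>" by simp
    also have "\<bar>CWf k\<bar> \<le> CW" unfolding CW_def by (rule member_le_sum) (use k in auto)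
    finally show "norm (eval_fps (fps_shift (2*R) (fps_binomial v * Gf ^ k)) z) \<le> CW"
      using CWf z by (meson order.trans)
  qed
  obtain CB' where CB': "\<forall>z. norm z \<le> 1/2 \<longrightarrow> norm (eval_fps (fps_binomial v) z) \<le> CB'"
  proof -
    have "ereal (1/2) < fps_conv_radius (fps_binomial v)"
      using binomial_radius[of v] by (simp add: order.strict_trans2[of _ 1])
    then show ?thesis using eval_fps_bounded that by blast
  qed
  define CB where "CB = \<bar>CB'\<bar>"
  have CB0: "CB \<ge> 0" by (simp add: CB_def)
  have CB: "\<forall>z. norm z \<le> 1/2 \<longrightarrow> norm (eval_fps (fps_binomial v) z) \<le> CB"
    using CB' unfolding CB_def by (meson abs_ge_self order.trans)
  define \<delta> where "\<delta> = 1 / (4 * (\<bar>CG\<bar> + 1))"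
  have d0: "\<delta> > 0" by (simp add: \<delta>_def add_pos_nonneg)
  have d1: "\<delta> \<le> 1/4" by (simp add: \<delta>_def field_simps)
  have dCG: "CG * \<delta> \<le> 1/4"
  proof -
    have "CG * \<delta> \<le> (\<bar>CG\<bar> + 1) * \<delta>" using d0 by (intro mult_right_mono) auto
    also have "\<dots> = 1/4" by (simp add: \<delta>_def field_simps)
    finally show ?thesis .
  qed
  define c\<phi> where "c\<phi> = min (\<delta> - ln (1 + \<delta>)) (-\<delta> - ln (1 - \<delta>))"
  have c\<phi>: "c\<phi> > 0" unfolding c\<phi>_def by (rule phi_pos) (use d0 d1 in auto)
  define N0 where "N0 = \<bar>Re v\<bar> + 1"
  have N0: "N0 \<ge> 1" "N0 > 0" "N0 + Re v + 1 > 0" by (auto simp: N0_def)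
  define M0 where "M0 = integral\<^sup>L lebesgue (\<lambda>s. norm (Iint v N0 s))"
  define Mabs where "Mabs = (\<lambda>p::nat. integral\<^sup>L lebesgue (\<lambda>s::real. exp (- (s^2) / 2) * \<bar>s\<bar> ^ p))"
  define A where "A = (\<lambda>N s::real.
      CW * (\<Sum>k<2*R. N^k * s^(2*k+2*R) * exp (-N * s^2/2)) + CB * CG^(2*R) * (N^(2*R) * s^(6*R) * exp (-N * s^2/4))
      + exp (-(N - N0) * c\<phi>) * norm (Iint v N0 s)
      + exp (-(N - 1) * \<delta>^2 / 2) * (\<Sum>k<2*R. \<Sum>m<2*R. norm (c k m) * (N^k / fact k) * (exp (- (s^2) / 2) * \<bar>s\<bar> ^ (2*k+m))))"
  define Aval where "Aval = (\<lambda>N::real.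
      CW * (\<Sum>k<2*R. N^k * gmom N (2*k+2*R)) + CB * CG^(2*R) * (N^(2*R) * gmom (N/2) (6*R))
      + exp (-(N - N0) * c\<phi>) * M0
      + exp (-(N - 1) * \<delta>^2 / 2) * (\<Sum>k<2*R. \<Sum>m<2*R. norm (c k m) * (N^k / fact k) * Mabs (2*k+m)))"
  have hbA: "has_bochner_integral lebesgue (A N) (Aval N)" if N: "N > 0" for N
  proof -
    have i0: "integrable lebesgue (Iint v N0)" by (rule Iint_integrable) (use N0 in auto)
    have h3: "has_bochner_integral lebesgue (\<lambda>s. norm (Iint v N0 s)) M0"
      unfolding M0_def using integrable_norm[OF i0] by (rule has_bochner_integral_integrable)
    have h4: "has_bochner_integral lebesgue (\<lambda>s::real. exp (- (s^2) / 2) * \<bar>s\<bar> ^ p) (Mabs p)" for p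
      unfolding Mabs_def using gauss_abs_integrable by (rule has_bochner_integral_integrable)
    show ?thesis unfolding A_def Aval_def
      by (intro has_bochner_integral_add has_bochner_integral_mult_right has_bochner_integral_sum
            gauss_mom_int gauss_mom_int4 h3 h4 N)
  qed
  have pw: "norm (Iint v N s - complex_of_real (exp (-N * s^2/2)) * Tpoly v R N s) \<le> A N s"
    if N: "N \<ge> N0" for N s
  proof -
    have N1: "N \<ge> 1" using N N0 by linarith
    define T1 where "T1 = CW * (\<Sum>k<2*R. N^k * s^(2*k+2*R) * exp (-N * s^2/2)) + CB * CG^(2*R) * (N^(2*R) * s^(6*R) * exp (-N * s^2/4))"
    define T3 where "T3 = exp (-(N - N0) * c\<phi>) * norm (Iint v N0 s)"
    define T4 where "T4 = exp (-(N - 1) * \<delta>^2 / 2) * (\<Sum>k<2*R. \<Sum>m<2*R. norm (c k m) * (N^k / fact k) * (exp (- (s^2) / 2) * \<bar>s\<bar> ^ (2*k+m)))"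
    have AT: "A N s = T1 + T3 + T4" by (simp add: A_def T1_def T3_def T4_def)
    have T1: "T1 \<ge> 0"
    proof -
      have "(\<Sum>k<2*R. N^k * s^(2*k+2*R) * exp (-N * s^2/2)) \<ge> 0"
        using N1 by (intro sum_nonneg) (auto simp: zero_le_even_power)
      moreover have "CG^(2*R) \<ge> 0" by (simp add: zero_le_even_power)
      moreover have "s^(6*R) \<ge> 0" by (simp add: zero_le_even_power)
      ultimately show ?thesis unfolding T1_def using CW0 CB0 N1 by (intro add_nonneg_nonneg mult_nonneg_nonneg) auto
    qed
    have T3: "T3 \<ge> 0" by (simp add: T3_def)
    have T4: "T4 \<ge> 0" unfolding T4_def using N1 by (intro mult_nonneg_nonneg sum_nonneg) auto
    show ?thesis
    proof (cases "\<bar>s\<bar> \<le> \<delta>")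
      case True
      have "norm (Iint v N s - complex_of_real (exp (-N * s^2/2)) * Tpoly v R N s) \<le> T1"
        unfolding T1_def
      proof (rule local_bound_pointwise[OF CG CW CB])
        show "\<bar>s\<bar> \<le> 1/2" using True d1 by linarith
        have "CG * \<bar>s\<bar> \<le> \<bar>CG\<bar> * \<delta>" using True by (intro order.trans[OF abs_ge_self[of "CG * \<bar>s\<bar>", unfolded abs_mult abs_abs]] mult_left_mono) auto
        also have "\<bar>CG\<bar> * \<delta> \<le> (\<bar>CG\<bar> + 1) * \<delta>" using d0 by (intro mult_right_mono) auto
        also have "\<dots> = 1/4" by (simp add: \<delta>_def field_simps)
        finally show "CG * \<bar>s\<bar> \<le> 1/4" .
        show "N \<ge> 0" using N1 by simp
      qed
      then show ?thesis unfolding AT using T3 T4 by linarith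
    next
      case False
      have nI: "norm (Iint v N s) \<le> T3"
        unfolding T3_def c\<phi>_def by (rule Iint_tail) (use d0 d1 False N in auto)
      have ng: "norm (complex_of_real (exp (-N * s^2/2)) * Tpoly v R N s) \<le> T4"
      proof -
        have "norm (complex_of_real (exp (-N * s^2/2)) * Tpoly v R N s) = exp (-N * s^2/2) * norm (Tpoly v R N s)"
          by (simp add: norm_mult)
        also have "\<dots> \<le> (exp (-(N - 1) * \<delta>^2 / 2) * exp (- (s^2) / 2)) *
              (\<Sum>k<2*R. \<Sum>m<2*R. norm (c k m) * (N^k / fact k * \<bar>s\<bar> ^ (2*k+m)))"
          unfolding c_def
          by (intro mult_mono gauss_tail norm_Tpoly) (use N1 False d0 in auto)
        also have "\<dots> = T4"
          unfolding T4_def by (simp add: sum_distrib_left mult_ac)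
        finally show ?thesis .
      qed
      have "norm (Iint v N s - complex_of_real (exp (-N * s^2/2)) * Tpoly v R N s) \<le>
            norm (Iint v N s) + norm (complex_of_real (exp (-N * s^2/2)) * Tpoly v R N s)"
        by (rule norm_triangle_ineq4)
      also have "\<dots> \<le> T3 + T4" using nI ng by simp
      finally show ?thesis unfolding AT using T1 by linarith
    qed
  qed
  have ib: "norm (integral\<^sup>L lebesgue (Iint v N) -
            complex_of_real (sqrt (2 * pi / N)) * (\<Sum>r<R. gamma_coeff r v / complex_of_real N ^ r)) \<le> Aval N"
    if N: "N \<ge> N0" for N
  proof -
    have Np: "N > 0" using N N0 by linarith
    have iI: "integrable lebesgue (Iint v N)" by (rule Iint_integrable) (use N N0 in auto)
    have hT: "has_bochner_integral lebesgue (\<lambda>s. complex_of_real (exp (-N * s^2/2)) * Tpoly v R N s)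
       (complex_of_real (sqrt (2 * pi / N)) * (\<Sum>r<R. gamma_coeff r v / complex_of_real N ^ r))"
      using gT_integral[OF Np, of v R] unfolding gT_value[OF Np] .
    have iT: "integrable lebesgue (\<lambda>s. complex_of_real (exp (-N * s^2/2)) * Tpoly v R N s)"
      using hT by (rule integrable.intros)
    have vT: "integral\<^sup>L lebesgue (\<lambda>s. complex_of_real (exp (-N * s^2/2)) * Tpoly v R N s) =
       complex_of_real (sqrt (2 * pi / N)) * (\<Sum>r<R. gamma_coeff r v / complex_of_real N ^ r)"
      using hT by (rule has_bochner_integral_integral_eq)
    have iD: "integrable lebesgue (\<lambda>s. Iint v N s - complex_of_real (exp (-N * s^2/2)) * Tpoly v R N s)"
      using iI iT by (rule Bochner_Integration.integrable_diff)
    have "integral\<^sup>L lebesgue (Iint v N) - complex_of_real (sqrt (2 * pi / N)) * (\<Sum>r<R. gamma_coeff r v / complex_of_real N ^ r)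
        = integral\<^sup>L lebesgue (\<lambda>s. Iint v N s - complex_of_real (exp (-N * s^2/2)) * Tpoly v R N s)"
      using iI iT vT by (simp add: integral_diff)
    also have "norm \<dots> \<le> integral\<^sup>L lebesgue (\<lambda>s. norm (Iint v N s - complex_of_real (exp (-N * s^2/2)) * Tpoly v R N s))"
      by (rule integral_norm_bound)
    also have "\<dots> \<le> integral\<^sup>L lebesgue (A N)"
    proof -
      have iA: "integrable lebesgue (A N)" using hbA[OF Np] by (rule integrable.intros)
      show ?thesis by (rule integral_mono[OF integrable_norm[OF iD] iA]) (rule pw[OF N])
    qed
    also have "\<dots> = Aval N" using hbA[OF Np] by (rule has_bochner_integral_integral_eq)
    finally show ?thesis .
  qed
  define K12 where "K12 = CW * (\<Sum>k<2*R. gmom 1 (2*k+2*R)) + CB * CG^(2*R) * (gmom 1 (6*R) * 2^(3*R) * sqrt 2)"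
  define K4 where "K4 = (\<Sum>k<2*R. \<Sum>m<2*R. norm (c k m) / fact k * Mabs (2*k+m))"
  have M00: "M0 \<ge> 0" unfolding M0_def by (rule integral_nonneg_AE) auto
  have Mabs0: "Mabs p \<ge> 0" for p unfolding Mabs_def by (rule integral_nonneg_AE) auto
  have Abd: "Aval N \<le> K12 * (1 / (N^R * sqrt N)) + M0 * exp (-(N - N0) * c\<phi>) + K4 * (exp (-(N - 1) * \<delta>^2 / 2) * N^(2*R))"
    if N: "N \<ge> 1" for N
  proof -
    have Np: "N > 0" using N by simp
    have e1: "N^k * gmom N (2*k+2*R) = gmom 1 (2*k+2*R) * (1 / (N^R * sqrt N))" for k
      using Np by (simp add: gmom_scale[OF Np] power_add field_simps)
    have e2: "N^(2*R) * gmom (N/2) (6*R) = (gmom 1 (6*R) * 2^(3*R) * sqrt 2) * (1 / (N^R * sqrt N))"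
    proof -
      have dv: "(6*R) div 2 = 3*R" by simp
      have g: "gmom (N/2) (6*R) = gmom 1 (6*R) / (N/2)^(3*R) / sqrt (N/2)"
        using gmom_scale[of "N/2" "6*R"] Np unfolding dv by simp
      have h: "N^(2*R) / (N/2)^(3*R) / sqrt (N/2) = 2^(3*R) * sqrt 2 * (1 / (N^R * sqrt N))"
      proof -
        have a0: "3*R = 2*R + R" by simp
        have a: "N^(3*R) = N^(2*R) * N^R" unfolding a0 by (rule power_add)
        have b: "sqrt (N/2) = sqrt N / sqrt 2" by (simp add: real_sqrt_divide)
        show ?thesis using Np unfolding b power_divide a by (simp add: field_simps)
      qed
      have "N^(2*R) * gmom (N/2) (6*R) = gmom 1 (6*R) * (N^(2*R) / (N/2)^(3*R) / sqrt (N/2))"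
        unfolding g by (simp add: mult.commute)
      also have "\<dots> = gmom 1 (6*R) * (2^(3*R) * sqrt 2 * (1 / (N^R * sqrt N)))" by (simp only: h)
      finally show ?thesis by (simp only: mult_ac)
    qed
    have s4: "(\<Sum>k<2*R. \<Sum>m<2*R. norm (c k m) * (N^k / fact k) * Mabs (2*k+m)) \<le> K4 * N^(2*R)"
      unfolding K4_def sum_distrib_right
    proof (intro sum_mono)
      fix k m assume k: "k \<in> {..<2*R}"
      have pow: "N^k \<le> N^(2*R)" using N k by (intro power_increasing) auto
      have nn: "0 \<le> norm (c k m) / fact k * Mabs (2*k+m)" using Mabs0[of "2*k+m"] by simp
      have "norm (c k m) * (N^k / fact k) * Mabs (2*k+m) = (norm (c k m) / fact k * Mabs (2*k+m)) * N^k"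
        by (simp add: field_simps)
      also have "\<dots> \<le> (norm (c k m) / fact k * Mabs (2*k+m)) * N^(2*R)" by (rule mult_left_mono[OF pow nn])
      finally show "norm (c k m) * (N^k / fact k) * Mabs (2*k+m) \<le> norm (c k m) / fact k * Mabs (2*k+m) * N^(2*R)" .
    qed
    have "Aval N = K12 * (1 / (N^R * sqrt N)) + exp (-(N - N0) * c\<phi>) * M0
      + exp (-(N - 1) * \<delta>^2 / 2) * (\<Sum>k<2*R. \<Sum>m<2*R. norm (c k m) * (N^k / fact k) * Mabs (2*k+m))"
      unfolding Aval_def K12_def e1 e2 by (simp add: sum_distrib_right sum_distrib_left sum_divide_distrib algebra_simps)
    also have "\<dots> \<le> K12 * (1 / (N^R * sqrt N)) + exp (-(N - N0) * c\<phi>) * M0 + exp (-(N - 1) * \<delta>^2 / 2) * (K4 * N^(2*R))"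
      using s4 by (intro add_left_mono mult_left_mono) auto
    finally show ?thesis by (simp add: mult_ac)
  qed
  have bo: "(\<lambda>N::real. K12 * (1 / (N^R * sqrt N)) + M0 * exp (-(N - N0) * c\<phi>) + K4 * (exp (-(N - 1) * \<delta>^2 / 2) * N^(2*R)))
      \<in> O(\<lambda>N. 1 / (N^R * sqrt N))"
  proof -
    have b1: "(\<lambda>N::real. K12 * (1 / (N^R * sqrt N))) \<in> O(\<lambda>N. 1 / (N^R * sqrt N))"
      by (simp only: cmult_in_bigo_iff) (rule disjI2, rule landau_o.big_refl)
    have b2: "(\<lambda>N::real. M0 * exp (-(N - N0) * c\<phi>)) \<in> O(\<lambda>N. 1 / (N^R * sqrt N))"
      using asym1[OF c\<phi>, of N0 R] by (simp only: cmult_in_bigo_iff) blast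
    have b3: "(\<lambda>N::real. K4 * (exp (-(N - 1) * \<delta>^2 / 2) * N^(2*R))) \<in> O(\<lambda>N. 1 / (N^R * sqrt N))"
      using asym2[OF d0, of R] by (simp only: cmult_in_bigo_iff) blast
    show ?thesis by (rule sum_in_bigo(1)[OF sum_in_bigo(1)[OF b1 b2] b3])
  qed
  then obtain C where C: "C > 0" "eventually (\<lambda>N. norm (K12 * (1 / (N^R * sqrt N)) + M0 * exp (-(N - N0) * c\<phi>) + K4 * (exp (-(N - 1) * \<delta>^2 / 2) * N^(2*R)))
       \<le> C * norm (1 / (N^R * sqrt N))) at_top"
    by (elim landau_o.bigE)
  have ev: "eventually (\<lambda>N::real. N \<ge> max 1 N0) at_top" by (rule eventually_ge_at_top)
  show ?thesis
  proof (intro exI, rule eventually_mono[OF eventually_conj[OF ev C(2)]])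
    fix N :: real assume h: "N \<ge> max 1 N0 \<and> norm (K12 * (1 / (N^R * sqrt N)) + M0 * exp (-(N - N0) * c\<phi>) + K4 * (exp (-(N - 1) * \<delta>^2 / 2) * N^(2*R)))
       \<le> C * norm (1 / (N^R * sqrt N))"
    then have N: "N \<ge> 1" "N \<ge> N0" by auto
    have "norm (integral\<^sup>L lebesgue (Iint v N) -
            complex_of_real (sqrt (2 * pi / N)) * (\<Sum>r<R. gamma_coeff r v / complex_of_real N ^ r)) \<le> Aval N"
      by (rule ib[OF N(2)])
    also have "\<dots> \<le> K12 * (1 / (N^R * sqrt N)) + M0 * exp (-(N - N0) * c\<phi>) + K4 * (exp (-(N - 1) * \<delta>^2 / 2) * N^(2*R))"
      by (rule Abd[OF N(1)])
    also have "\<dots> \<le> C * norm (1 / (N^R * sqrt N))"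
    proof -
      have hb: "norm (K12 * (1 / (N^R * sqrt N)) + M0 * exp (-(N - N0) * c\<phi>) + K4 * (exp (-(N - 1) * \<delta>^2 / 2) * N^(2*R)))
       \<le> C * norm (1 / (N^R * sqrt N))" using h by (rule conjunct2)
      show ?thesis by (rule order.trans[OF _ hb]) (simp only: real_norm_def abs_ge_self)
    qed
    also have "\<dots> = C * (1 / (N^R * sqrt N))" using N by simp
    finally show "norm (integral\<^sup>L lebesgue (Iint v N) -
            complex_of_real (sqrt (2 * pi / N)) * (\<Sum>r<R. gamma_coeff r v / complex_of_real N ^ r)) \<le> C * (1 / (N^R * sqrt N))" .
  qed
qed

lemma sum_split0:
  fixes f :: "nat \<Rightarrow> 'a::comm_monoid_add"
  assumes "R \<ge> 1"
  shows "(\<Sum>r<R. f r) = f 0 + (\<Sum>r = 1..<R. f r)"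
  using assms by (simp add: lessThan_atLeast0 sum.atLeast_Suc_lessThan)

theorem proposition1p1:
  fixes v :: complex and R :: nat
  assumes "R \<ge> 1"
  shows "(\<lambda>n::real. Gamma (of_real n + v + 1)
            - complex_of_real (sqrt (2 * pi * n)) * exp ((of_real n + v) * of_real (ln n)) / of_real (exp n)
              * (1 + (\<Sum>r = 1..<R. gamma_coeff r v / of_real n ^ r)))
         \<in> O[at_top](\<lambda>n::real. complex_of_real (sqrt (2 * pi * n)) * exp ((of_real n + v) * of_real (ln n))
              / of_real (exp n) * of_real (1 / n ^ R))"
proof -
  obtain C where C: "eventually (\<lambda>N. norm (integral\<^sup>L lebesgue (Iint v N) -
            complex_of_real (sqrt (2 * pi / N)) * (\<Sum>r<R. gamma_coeff r v / complex_of_real N ^ r))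
          \<le> C * (1 / (N^R * sqrt N))) at_top"
    using main_estimate[OF assms] by blast
  have ev: "eventually (\<lambda>N::real. N \<ge> \<bar>Re v\<bar> + 1) at_top" by (rule eventually_ge_at_top)
  show ?thesis
  proof (rule bigoI[where c = "C / sqrt (2 * pi)"], rule eventually_mono[OF eventually_conj[OF ev C]])
    fix N :: real
    assume h: "N \<ge> \<bar>Re v\<bar> + 1 \<and> norm (integral\<^sup>L lebesgue (Iint v N) -
            complex_of_real (sqrt (2 * pi / N)) * (\<Sum>r<R. gamma_coeff r v / complex_of_real N ^ r))
          \<le> C * (1 / (N^R * sqrt N))"
    have N: "N > 0" "N + Re v + 1 > 0" using h by auto
    define S0 where "S0 = exp ((complex_of_real N + v) * complex_of_real (ln N)) / complex_of_real (exp N)"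
    define P where "P = (\<Sum>r<R. gamma_coeff r v / complex_of_real N ^ r)"
    define J where "J = integral\<^sup>L lebesgue (Iint v N)"
    have S0nz: "S0 \<noteq> 0" by (simp add: S0_def)
    have hJ: "J = Gamma (complex_of_real N + v + 1) / (complex_of_real N * S0)"
      unfolding J_def S0_def using Iint_Gamma[OF N] by (rule has_bochner_integral_integral_eq)
    have G: "Gamma (complex_of_real N + v + 1) = complex_of_real N * S0 * J"
      using hJ N S0nz by (simp add: field_simps)
    have P1: "1 + (\<Sum>r = 1..<R. gamma_coeff r v / complex_of_real N ^ r) = P"
      unfolding P_def using sum_split0[OF assms, of "\<lambda>r. gamma_coeff r v / complex_of_real N ^ r"]
      by (simp add: gamma_coeff_0)
    have sq: "sqrt (2 * pi * N) = N * sqrt (2 * pi / N)"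
    proof -
      have e: "2 * pi * N = N^2 * (2 * pi / N)" using N by (simp add: power2_eq_square field_simps)
      have "sqrt (2 * pi * N) = sqrt (N^2) * sqrt (2 * pi / N)" unfolding e by (rule real_sqrt_mult)
      also have "sqrt (N^2) = N" using N by simp
      finally show ?thesis .
    qed
    have LHS: "Gamma (complex_of_real N + v + 1)
            - complex_of_real (sqrt (2 * pi * N)) * exp ((complex_of_real N + v) * complex_of_real (ln N)) / complex_of_real (exp N)
              * (1 + (\<Sum>r = 1..<R. gamma_coeff r v / complex_of_real N ^ r))
          = complex_of_real N * S0 * (J - complex_of_real (sqrt (2 * pi / N)) * P)"
    proof -
      have e: "complex_of_real (N * sqrt (2 * pi / N)) * exp ((complex_of_real N + v) * complex_of_real (ln N)) / complex_of_real (exp N)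
          = complex_of_real N * complex_of_real (sqrt (2 * pi / N)) * S0"
        by (simp add: S0_def)
      show ?thesis unfolding G P1 sq e by (simp add: algebra_simps)
    qed
    have RHS: "norm (complex_of_real (sqrt (2 * pi * N)) * exp ((complex_of_real N + v) * complex_of_real (ln N))
              / complex_of_real (exp N) * complex_of_real (1 / N ^ R)) = sqrt (2 * pi) * sqrt N * norm S0 / N ^ R"
      using N unfolding S0_def by (simp add: norm_mult norm_divide real_sqrt_mult norm_power)
    have bnd: "norm (J - complex_of_real (sqrt (2 * pi / N)) * P) \<le> C * (1 / (N^R * sqrt N))"
      using h unfolding J_def P_def by blast
    have "norm (Gamma (complex_of_real N + v + 1)
            - complex_of_real (sqrt (2 * pi * N)) * exp ((complex_of_real N + v) * complex_of_real (ln N)) / complex_of_real (exp N)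
              * (1 + (\<Sum>r = 1..<R. gamma_coeff r v / complex_of_real N ^ r)))
        = N * norm S0 * norm (J - complex_of_real (sqrt (2 * pi / N)) * P)"
      unfolding LHS using N by (simp add: norm_mult)
    also have "\<dots> \<le> N * norm S0 * (C * (1 / (N^R * sqrt N)))"
      using bnd N by (intro mult_left_mono) auto
    also have "\<dots> = C / sqrt (2 * pi) * (sqrt (2 * pi) * sqrt N * norm S0 / N ^ R)"
    proof -
      have "N = sqrt N * sqrt N" using N by simp
      then have "N / sqrt N = sqrt N" using N by (metis nonzero_mult_div_cancel_left real_sqrt_gt_0_iff order.strict_implies_not_eq mult.commute)
      then show ?thesis using N by (simp add: field_simps)
    qed
    finally show "norm (Gamma (complex_of_real N + v + 1)
            - complex_of_real (sqrt (2 * pi * N)) * exp ((complex_of_real N + v) * complex_of_real (ln N)) / complex_of_real (exp N)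
              * (1 + (\<Sum>r = 1..<R. gamma_coeff r v / complex_of_real N ^ r)))
        \<le> C / sqrt (2 * pi) * norm (complex_of_real (sqrt (2 * pi * N)) * exp ((complex_of_real N + v) * complex_of_real (ln N))
              / complex_of_real (exp N) * complex_of_real (1 / N ^ R))"
      unfolding RHS .
  qed
qed


end
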